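(* Let $m$ be even and $n\in\mathbf{N}$. Let $q:M^{(m^n)}\to H^{(m^n)}$ be the homomorphism of $\mathbf{Z}S_{mn}$-modules sending an $(m^n)$-tabloid to the set partition whose sets are the rows of the tabloid. Then the Specht module $S^{(m^n)}\subseteq M^{(m^n)}$ is not contained in the kernel of $q$.
   Context: $M^{(m^n)}$ is the Young permutation $\mathbf{Z}S_{mn}$-module with basis the $(m^n)$-tabloids (tableaux of shape $(m^n)$ with entries a fixed $mn$-set, rows unordered). $H^{(m^n)}$ is the permutation $\mathbf{Z}S_{mn}$-module with basis the set partitions of the same $mn$-set into $n$ sets each of size $m$. $S^{(m^n)}$ is the Specht module, the $\mathbf{Z}$-span of the polytabloids $e_t=\{t\}\sum_{\tau\in C(t)}\mathrm{sgn}(\tau)\tau$, $C(t)$ the column stabilizer of $t$. *)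

theory Defs
  imports "HOL-Combinatorics.Combinatorics"
begin

text \<open>The fixed mn-set is {0..<m*n}. A tableau of shape (m^n) is a bijection from the
cells {..<n} x {..<m} (row i, column j) onto {..<m*n}, normalised to 0 off the cells.\<close>

definition tableaux :: "nat \<Rightarrow> nat \<Rightarrow> (nat \<times> nat \<Rightarrow> nat) set" where
  "tableaux m n = {t. bij_betw t ({..<n} \<times> {..<m}) {..<m*n} \<and>
      (\<forall>p. p \<notin> {..<n} \<times> {..<m} \<longrightarrow> t p = 0)}"

definition tabloid :: "nat \<Rightarrow> nat \<Rightarrow> (nat \<times> nat \<Rightarrow> nat) \<Rightarrow> (nat \<Rightarrow> nat set)" where
  "tabloid m n t = (\<lambda>i. if i < n then t ` ({i} \<times> {..<m}) else {})"

definition tabloids :: "nat \<Rightarrow> nat \<Rightarrow> (nat \<Rightarrow> nat set) set" where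
  "tabloids m n = tabloid m n ` tableaux m n"

definition col_stab :: "nat \<Rightarrow> nat \<Rightarrow> (nat \<times> nat \<Rightarrow> nat) \<Rightarrow> (nat \<Rightarrow> nat) set" where
  "col_stab m n t = {\<tau>. \<tau> permutes {..<m*n} \<and>
      (\<forall>j<m. \<tau> ` (t ` ({..<n} \<times> {j})) = t ` ({..<n} \<times> {j}))}"

text \<open>Elements of M^(m^n) are integer-valued functions on tabloids (coefficients w.r.t.
the tabloid basis). The polytabloid e_t = sum over C(t) of sgn(tau) {tau t}.\<close>
definition polytabloid :: "nat \<Rightarrow> nat \<Rightarrow> (nat \<times> nat \<Rightarrow> nat) \<Rightarrow> ((nat \<Rightarrow> nat set) \<Rightarrow> int)" where
  "polytabloid m n t = (\<lambda>T. \<Sum>\<tau>\<in>col_stab m n t.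
      if tabloid m n (\<tau> \<circ> t) = T then sign \<tau> else 0)"

definition specht :: "nat \<Rightarrow> nat \<Rightarrow> ((nat \<Rightarrow> nat set) \<Rightarrow> int) set" where
  "specht m n = {x. \<exists>F c. finite F \<and> F \<subseteq> tableaux m n \<and>
      x = (\<lambda>T. \<Sum>t\<in>F. c t * polytabloid m n t T)}"

definition qmap :: "nat \<Rightarrow> nat \<Rightarrow> ((nat \<Rightarrow> nat set) \<Rightarrow> int) \<Rightarrow> (nat set set \<Rightarrow> int)" where
  "qmap m n x = (\<lambda>P. \<Sum>T\<in>{T \<in> tabloids m n. T ` {..<n} = P}. x T)"

end

theory Submission imports Defs begin

definition tz :: "nat \<Rightarrow> nat \<Rightarrow> nat \<times> nat \<Rightarrow> nat" where
  "tz m n = (\<lambda>(i,j). if i < n \<and> j < m then i*m+j else 0)"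

lemma lt_mn: "i < n \<Longrightarrow> j < (m::nat) \<Longrightarrow> i*m+j < m*n"
proof -
  assume a: "i < n" "j < m"
  have "i*m + j < i*m + m" using a by simp
  also have "\<dots> = (i+1)*m" by simp
  also have "\<dots> \<le> n*m" using a by (intro mult_right_mono) auto
  finally show ?thesis by (simp add: mult.commute)
qed

lemma div_lt: "x < m*n \<Longrightarrow> x div m < (n::nat)"
  by (metis less_mult_imp_div_less mult.commute)

lemma tz_row: "i < n \<Longrightarrow> tz m n ` ({i} \<times> {..<m}) = {x. x < m*n \<and> x div m = i}"
proof (rule set_eqI, rule iffI)
  fix x assume "i < n" "x \<in> tz m n ` ({i} \<times> {..<m})"
  then obtain j where "j < m" "x = i*m+j" by (auto simp: tz_def)
  then show "x \<in> {x. x < m*n \<and> x div m = i}" using lt_mn[OF \<open>i<n\<close>] by auto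
next
  fix x assume "i < n" "x \<in> {x. x < m*n \<and> x div m = i}"
  then have x: "x < m*n" "x div m = i" by auto
  then have "m > 0" by (cases m) auto
  have "x = i*m + x mod m" using x by (metis div_mult_mod_eq)
  moreover have "x mod m < m" using \<open>m>0\<close> by simp
  ultimately have "x = tz m n (i, x mod m)" using \<open>i<n\<close> by (simp add: tz_def)
  then show "x \<in> tz m n ` ({i} \<times> {..<m})" using \<open>x mod m < m\<close> by auto
qed

lemma tz_col: "j < m \<Longrightarrow> tz m n ` ({..<n} \<times> {j}) = {x. x < m*n \<and> x mod m = j}"
proof (rule set_eqI, rule iffI)
  fix x assume "j < m" "x \<in> tz m n ` ({..<n} \<times> {j})"
  then obtain i where "i < n" "x = i*m+j" by (auto simp: tz_def)
  then show "x \<in> {x. x < m*n \<and> x mod m = j}" using lt_mn[OF \<open>i<n\<close> \<open>j<m\<close>] \<open>j<m\<close> by auto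
next
  fix x assume "j < m" "x \<in> {x. x < m*n \<and> x mod m = j}"
  then have x: "x < m*n" "x mod m = j" by auto
  have "x = (x div m)*m + j" using x by (metis div_mult_mod_eq)
  moreover have "x div m < n" using div_lt x by blast
  ultimately have "x = tz m n (x div m, j)" using \<open>j<m\<close> by (simp add: tz_def)
  then show "x \<in> tz m n ` ({..<n} \<times> {j})" using \<open>x div m < n\<close> by auto
qed

lemma tz_tableau: "tz m n \<in> tableaux m n"
proof -
  have inj: "inj_on (tz m n) ({..<n} \<times> {..<m})"
  proof (rule inj_onI)
    fix p q assume "p \<in> {..<n} \<times> {..<m}" "q \<in> {..<n} \<times> {..<m}" "tz m n p = tz m n q"
    then obtain i j i' j' where pq: "p = (i,j)" "q = (i',j')" "j < m" "j' < m" "i < n" "i' < n"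
      "i*m+j = i'*m+j'"
      by (cases p, cases q) (simp add: tz_def)
    have "m > 0" using pq by auto
    have "j = (i*m+j) mod m" "j' = (i'*m+j') mod m" using pq(3,4) by simp_all
    then have jj: "j = j'" using pq(7) by metis
    have "i = (i*m+j) div m" "i' = (i'*m+j') div m" using pq(3,4) \<open>m>0\<close> by simp_all
    then have "i = i'" using pq(7) by metis
    then show "p = q" using pq jj by simp
  qed
  have img: "tz m n ` ({..<n} \<times> {..<m}) = {..<m*n}"
  proof
    show "tz m n ` ({..<n} \<times> {..<m}) \<subseteq> {..<m*n}" using lt_mn by (auto simp: tz_def)
    show "{..<m*n} \<subseteq> tz m n ` ({..<n} \<times> {..<m})"
    proof
      fix x assume "x \<in> {..<m*n}"
      then have x: "x < m*n" by simp
      then have "m > 0" by (cases m) auto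
      have "x div m < n" using div_lt x by blast
      then have "x \<in> tz m n ` ({x div m} \<times> {..<m})" using tz_row x by blast
      then show "x \<in> tz m n ` ({..<n} \<times> {..<m})" using \<open>x div m < n\<close> by (auto intro: image_mono[THEN subsetD, rotated])
    qed
  qed
  show ?thesis unfolding tableaux_def using inj img
    by (auto simp: bij_betw_def tz_def)
qed

lemma even_step:
  fixes m n x :: nat
  assumes "even m" "x < m*n" "even (x mod m)"
  shows "x+1 < m*n" "(x+1) mod m = x mod m + 1" "(x+1) div m = x div m"
proof -
  have m: "m > 0" using assms(2) by (cases "m = 0") auto
  have "x mod m < m" using m by simp
  moreover have "x mod m \<noteq> m - 1" using assms m
    by (metis One_nat_def Suc_pred even_Suc)
  ultimately have lt: "x mod m + 1 < m" by linarith
  have eq: "x + 1 = (x div m)*m + (x mod m + 1)" by (metis add.assoc div_mult_mod_eq)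
  show "(x+1) mod m = x mod m + 1" "(x+1) div m = x div m" using lt eq
    by (metis mod_mult_self3 mod_less, metis div_mult_self3 div_less add.right_neutral m less_not_refl2)
  have "x div m < n" using div_lt assms(2) by blast
  then show "x+1 < m*n" using lt_mn[of "x div m" n "x mod m + 1" m] lt eq by simp
qed

lemma odd_step:
  fixes m n x :: nat
  assumes "x < m*n" "odd (x mod m)"
  shows "x-1 < m*n" "(x-1) mod m = x mod m - 1" "(x-1) div m = x div m" "x mod m \<ge> 1"
proof -
  have m: "m > 0" using assms(1) by (cases "m = 0") auto
  show ge: "x mod m \<ge> 1" using assms(2) by (cases "x mod m") auto
  have lt: "x mod m - 1 < m" using m by (meson le_less_trans diff_le_self mod_less_divisor)
  have eq: "x - 1 = (x div m)*m + (x mod m - 1)" using ge by (metis add_diff_assoc div_mult_mod_eq)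
  show "(x-1) mod m = x mod m - 1" "(x-1) div m = x div m" using lt eq
    by (metis mod_mult_self3 mod_less, metis div_mult_self3 div_less add.right_neutral m less_not_refl2)
  show "x-1 < m*n" using assms(1) by linarith
qed

lemma key_sign:
  fixes m n :: nat and \<tau> :: "nat \<Rightarrow> nat"
  assumes ev: "even m" and perm: "\<tau> permutes {..<m*n}"
    and col: "\<And>x. x < m*n \<Longrightarrow> \<tau> x mod m = x mod m"
    and row: "\<And>x y. x < m*n \<Longrightarrow> y < m*n \<Longrightarrow> x div m = y div m \<Longrightarrow> \<tau> x div m = \<tau> y div m"
  shows "sign \<tau> = 1"
proof -
  define E where "E = (\<lambda>x. if even (x mod m) then \<tau> x else x)"
  define C where "C = (\<lambda>x. if x < m*n then (if even (x mod m) then x+1 else x-1) else x)"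
  have tin: "\<And>x. x < m*n \<Longrightarrow> \<tau> x < m*n" using perm permutes_in_image by fastforce
  have tout: "\<And>x. \<not> x < m*n \<Longrightarrow> \<tau> x = x" using perm permutes_not_in by fastforce
  have E_perm: "E permutes {..<m*n}"
  proof (rule bij_imp_permutes)
    have sub: "E ` {..<m*n} \<subseteq> {..<m*n}" using tin by (auto simp: E_def)
    have inj: "inj_on E {..<m*n}"
    proof (rule inj_onI)
      fix x y assume xy: "x \<in> {..<m*n}" "y \<in> {..<m*n}" "E x = E y"
      have ti: "inj \<tau>" using perm permutes_inj by blast
      show "x = y"
      proof (cases "even (x mod m)"; cases "even (y mod m)")
        assume "even (x mod m)" "even (y mod m)" then show ?thesis
          using xy ti by (auto simp: E_def inj_def)
      next
        assume a: "even (x mod m)" "odd (y mod m)"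
        then have "\<tau> x = y" using xy by (simp add: E_def)
        then show ?thesis using col[of x] xy a by auto
      next
        assume a: "odd (x mod m)" "even (y mod m)"
        then have "\<tau> y = x" using xy by (simp add: E_def)
        then show ?thesis using col[of y] xy a by auto
      next
        assume "odd (x mod m)" "odd (y mod m)" then show ?thesis using xy by (simp add: E_def)
      qed
    qed
    show "bij_betw E {..<m*n} {..<m*n}"
      using endo_inj_surj[OF finite_lessThan sub inj] inj by (simp add: bij_betw_def)
    show "\<And>x. x \<notin> {..<m*n} \<Longrightarrow> E x = x" using tout by (simp add: E_def)
  qed
  have CC: "\<And>x. C (C x) = x"
  proof -
    fix x show "C (C x) = x"
    proof (cases "x < m*n")
      case True
      show ?thesis
      proof (cases "even (x mod m)")
        case e: True
        note s = even_step[OF ev True e]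
        have "odd ((x+1) mod m)" using s e by simp
        then show ?thesis using s e True by (simp add: C_def)
      next
        case o: False
        note s = odd_step[OF True o]
        have "even ((x-1) mod m)" using s o by (metis One_nat_def Suc_pred even_Suc le_eq_less_or_eq neq0_conv not_one_le_zero o)
        have "x \<ge> 1" using s(4) by (meson le_trans mod_less_eq_dividend)
        then show ?thesis using s o True by (simp add: C_def)
      qed
    qed (simp add: C_def)
  qed
  have C_perm: "C permutes {..<m*n}"
  proof (rule bij_imp_permutes)
    have sub: "C ` {..<m*n} \<subseteq> {..<m*n}" using even_step[OF ev] odd_step by (auto simp: C_def)
    have inj: "inj_on C {..<m*n}" by (metis CC inj_onI)
    show "bij_betw C {..<m*n} {..<m*n}"
      using endo_inj_surj[OF finite_lessThan sub inj] inj by (simp add: bij_betw_def)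
    show "\<And>x. x \<notin> {..<m*n} \<Longrightarrow> C x = x" by (simp add: C_def)
  qed
  have decomp: "\<tau> = E \<circ> (C \<circ> (E \<circ> C))"
  proof
    fix x show "\<tau> x = (E \<circ> (C \<circ> (E \<circ> C))) x"
    proof (cases "x < m*n")
      case False then show ?thesis using tout by (simp add: C_def E_def)
    next
      case True
      show ?thesis
      proof (cases "even (x mod m)")
        case e: True
        note s = even_step[OF ev True e]
        have "odd ((x+1) mod m)" using s e by simp
        then show ?thesis using s e True by (simp add: C_def E_def)
      next
        case o: False
        note s = odd_step[OF True o]
        have ev1: "even ((x-1) mod m)" using s o
           by (metis One_nat_def Suc_pred even_Suc le_eq_less_or_eq neq0_conv not_one_le_zero)
        define y where "y = \<tau> (x-1)"
        have y: "y < m*n" "y mod m = x mod m - 1" "y div m = \<tau> x div m"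
          using tin[OF s(1)] col[OF s(1)] row[OF s(1) True s(3)] s by (simp_all add: y_def)
        have ye: "even (y mod m)" using y ev1 s by simp
        note t = even_step[OF ev y(1) ye]
        have "\<tau> x = y + 1"
        proof -
          have "\<tau> x = (\<tau> x div m)*m + \<tau> x mod m" by simp
          also have "\<dots> = (y div m)*m + (y mod m + 1)" using y col[OF True] s(4) by simp
          also have "\<dots> = y + 1" by simp
          finally show ?thesis .
        qed
        moreover have "odd ((y+1) mod m)" using t ye by simp
        ultimately show ?thesis using True o ev1 ye t by (simp add: C_def E_def y_def)
      qed
    qed
  qed
  have pE: "permutation E" and pC: "permutation C"
    using E_perm C_perm permutes_imp_permutation by blast+
  have "sign \<tau> = sign E * (sign C * (sign E * sign C))"
    unfolding decomp using pE pC by (simp add: sign_compose permutation_compose)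
  then show ?thesis by (simp add: sign_def)
qed

lemma finite_tabloids: "finite (tabloids m n)"
proof -
  let ?g = "\<lambda>f::nat \<Rightarrow> nat set. \<lambda>i. if i < n then f i else {}"
  have "tabloids m n \<subseteq> ?g ` ({..<n} \<rightarrow>\<^sub>E Pow {..<m*n})"
  proof
    fix T assume "T \<in> tabloids m n"
    then obtain t where t: "t \<in> tableaux m n" "T = tabloid m n t" by (auto simp: tabloids_def)
    have bt: "bij_betw t ({..<n} \<times> {..<m}) {..<m*n}" using t(1) by (simp add: tableaux_def)
    have sub: "\<And>i. i < n \<Longrightarrow> T i \<subseteq> {..<m*n}"
      using bij_betw_imp_surj_on[OF bt] by (auto simp: t(2) tabloid_def)
    have "T = ?g (restrict T {..<n})" by (rule ext) (simp add: t(2) tabloid_def)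
    moreover have "restrict T {..<n} \<in> {..<n} \<rightarrow>\<^sub>E Pow {..<m*n}" using sub by auto
    ultimately show "T \<in> ?g ` ({..<n} \<rightarrow>\<^sub>E Pow {..<m*n})" by blast
  qed
  moreover have "finite ({..<n} \<rightarrow>\<^sub>E Pow {..<m*n})" by (simp add: finite_PiE)
  ultimately show ?thesis using finite_subset by blast
qed

lemma col_facts:
  assumes "\<tau> \<in> col_stab m n (tz m n)"
  shows "\<tau> permutes {..<m*n}" "\<And>x. x < m*n \<Longrightarrow> \<tau> x mod m = x mod m"
proof -
  show p: "\<tau> permutes {..<m*n}" using assms by (simp add: col_stab_def)
  fix x assume x: "x < m*n"
  then have m: "m > 0" by (cases "m = 0") auto
  let ?j = "x mod m"
  have j: "?j < m" using m by simp
  have "\<tau> ` {y. y < m*n \<and> y mod m = ?j} = {y. y < m*n \<and> y mod m = ?j}"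
  proof -
    have al: "\<forall>j<m. \<tau> ` (tz m n ` ({..<n} \<times> {j})) = tz m n ` ({..<n} \<times> {j})"
      using assms unfolding col_stab_def by simp
    have "\<tau> ` (tz m n ` ({..<n} \<times> {?j})) = tz m n ` ({..<n} \<times> {?j})"
      using al[rule_format, OF j] .
    then show ?thesis using tz_col[OF j, of n] by simp
  qed
  moreover have "\<tau> x \<in> \<tau> ` {y. y < m*n \<and> y mod m = ?j}" using x by auto
  ultimately show "\<tau> x mod m = x mod m" by auto
qed

lemma row_facts:
  assumes "tabloid m n (\<tau> \<circ> tz m n) ` {..<n} = tabloid m n (tz m n) ` {..<n}"
    and "x < m*n" "y < m*n" "x div m = y div m"
  shows "\<tau> x div m = \<tau> y div m"
proof -
  let ?i = "x div m"
  have i: "?i < n" using div_lt assms(2) by blast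
  let ?R = "\<lambda>i. {z. z < m*n \<and> z div m = i}"
  have T1: "tabloid m n (\<tau> \<circ> tz m n) ?i = \<tau> ` ?R ?i"
  proof -
    have "tabloid m n (\<tau> \<circ> tz m n) ?i = (\<tau> \<circ> tz m n) ` ({?i} \<times> {..<m})"
      using i by (simp add: tabloid_def)
    also have "\<dots> = \<tau> ` (tz m n ` ({?i} \<times> {..<m}))" by (rule image_comp[symmetric])
    finally show ?thesis using tz_row[OF i, of m] by simp
  qed
  have mem: "tabloid m n (\<tau> \<circ> tz m n) ?i \<in> tabloid m n (tz m n) ` {..<n}"
    using assms(1) i by blast
  obtain k where kk: "k \<in> {..<n}" "tabloid m n (\<tau> \<circ> tz m n) ?i = tabloid m n (tz m n) k"
    using mem by (rule imageE)
  have k0: "k < n" "\<tau> ` ?R ?i = tabloid m n (tz m n) k"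
    using kk(1) apply simp
    using T1 kk(2) by (rule trans[OF sym])
  have "tabloid m n (tz m n) k = ?R k" using k0(1) tz_row[OF k0(1), of m] by (simp add: tabloid_def)
  with k0(2) have k: "\<tau> ` ?R ?i = ?R k" by (rule trans)
  have xin: "x \<in> ?R ?i" and yin: "y \<in> ?R ?i" using assms(2,3,4) by simp_all
  have "\<tau> x \<in> ?R k" unfolding k[symmetric] using xin by (rule imageI)
  moreover have "\<tau> y \<in> ?R k" unfolding k[symmetric] using yin by (rule imageI)
  ultimately show ?thesis by simp
qed

theorem lemma4p1:
  fixes m n :: nat
  assumes "even m"
  shows "\<not> specht m n \<subseteq> {x. qmap m n x = (\<lambda>_. 0)}"
proof
  assume H: "specht m n \<subseteq> {x. qmap m n x = (\<lambda>_. 0)}"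
  let ?t = "tz m n"
  let ?P = "tabloid m n ?t ` {..<n}"
  let ?S = "{T \<in> tabloids m n. T ` {..<n} = ?P}"
  let ?C = "col_stab m n ?t"
  have "polytabloid m n ?t \<in> specht m n"
    unfolding specht_def using tz_tableau
    by (intro CollectI exI[of _ "{?t}"] exI[of _ "\<lambda>_. 1"]) auto
  then have q0: "qmap m n (polytabloid m n ?t) ?P = 0" using H by auto
  have fS: "finite ?S" using finite_tabloids by simp
  have fC: "finite ?C"
    by (rule finite_subset[OF _ finite_permutations[of "{..<m*n}"]]) (simp_all add: col_stab_def subset_iff)
  have "qmap m n (polytabloid m n ?t) ?P
      = (\<Sum>T\<in>?S. \<Sum>\<tau>\<in>?C. if tabloid m n (\<tau> \<circ> ?t) = T then sign \<tau> else 0)"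
    unfolding qmap_def polytabloid_def by (rule refl)
  also have "\<dots> = (\<Sum>\<tau>\<in>?C. \<Sum>T\<in>?S. if tabloid m n (\<tau> \<circ> ?t) = T then sign \<tau> else 0)"
    by (rule sum.swap)
  also have "\<dots> = (\<Sum>\<tau>\<in>?C. if tabloid m n (\<tau> \<circ> ?t) \<in> ?S then sign \<tau> else 0)"
    using fS by (simp add: sum.delta')
  finally have eq: "qmap m n (polytabloid m n ?t) ?P
      = (\<Sum>\<tau>\<in>?C. if tabloid m n (\<tau> \<circ> ?t) \<in> ?S then sign \<tau> else 0)" .
  have nn: "\<And>\<tau>. \<tau> \<in> ?C \<Longrightarrow> (if tabloid m n (\<tau> \<circ> ?t) \<in> ?S then sign \<tau> else 0) \<ge> 0"
  proof -
    fix \<tau> assume tC: "\<tau> \<in> ?C"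
    show "(if tabloid m n (\<tau> \<circ> ?t) \<in> ?S then sign \<tau> else 0) \<ge> 0"
    proof (cases "tabloid m n (\<tau> \<circ> ?t) \<in> ?S")
      case True
      then have r: "tabloid m n (\<tau> \<circ> ?t) ` {..<n} = ?P" by simp
      have "sign \<tau> = 1"
        by (rule key_sign[OF assms col_facts(1)[OF tC] col_facts(2)[OF tC] row_facts[OF r]])
      then show ?thesis using True by simp
    next
      case False then show ?thesis by (subst if_not_P[OF False]) simp
    qed
  qed
  have idC: "id \<in> ?C" by (simp add: col_stab_def permutes_id)
  have "tabloid m n (id \<circ> ?t) \<in> ?S" using tz_tableau by (simp add: tabloids_def)
  then have one: "(if tabloid m n (id \<circ> ?t) \<in> ?S then sign (id::nat\<Rightarrow>nat) else 0) = 1"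
    by (simp add: sign_id)
  have "1 \<le> (\<Sum>\<tau>\<in>?C. if tabloid m n (\<tau> \<circ> ?t) \<in> ?S then sign \<tau> else 0)"
    using member_le_sum[OF idC, of "\<lambda>\<tau>. if tabloid m n (\<tau> \<circ> ?t) \<in> ?S then sign \<tau> else 0"] nn fC one
    by simp
  then show False using eq q0 by simp
qed

end
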